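(* Let $d\ge2$ be even, let $K^\infty(t)=\frac{1}{2\pi}t(\pi-\arccos t)$, and for integers $k\ge0$ define $$a_k^d=V_d\int_{-1}^1K^\infty(t)\,P_{k,d}(t)\,(1-t^2)^{\frac{d-2}{2}}\,dt,\qquad V_d=\frac{\pi^{d/2}}{\Gamma(\frac d2+1)}.$$ Set $p=k+\frac{d-2}{2}$, $$C_1(d,k)=\frac{\pi^{d/2}}{d/2}\,\frac{(-1)^k}{2^k}\,\frac{1}{\Gamma(k+\frac d2)},\qquad C_2(q,d,k)=(-1)^q\binom{p}{q}\frac{(2q)!}{(2q-k)!}.$$ Then $$a_k^d=\begin{cases}C_1(d,0)\,\frac{1}{d\,2^{d+1}}\binom{d}{d/2}, & k=0,\\[2pt] C_1(d,1)\sum_{q=1}^{p}C_2(q,d,1)\,\frac{1}{2(2q+1)}, & k=1,\\[2pt] C_1(d,k)\sum_{q=\lceil k/2\rceil}^{p}C_2(q,d,k)\,\frac{1}{2(2q-k+2)}\Big(1-\frac{1}{2^{2q-k+2}}\binom{2q-k+2}{\frac{2q-k+2}{2}}\Big), & k\ge2\text{ even},\\[2pt] 0,& k\ge3\text{ odd}.\end{cases}$$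
   Context: $P_{k,d}$ is the Gegenbauer polynomial (zonal harmonic of degree $k$ on $\mathbb{S}^d\subset\mathbb{R}^{d+1}$): $P_{k,d}(t)=\frac{(-1)^k}{2^k}\frac{\Gamma(\frac d2)}{\Gamma(k+\frac d2)}\frac{1}{(1-t^2)^{\frac{d-2}{2}}}\frac{d^k}{dt^k}(1-t^2)^{k+\frac{d-2}{2}}$. By the Funk–Hecke theorem, $a_k^d$ is (up to the fixed normalizing constant $V_d$, which is independent of $k$) the eigenvalue of convolution on $\mathbb{S}^d$ with $K^\infty$ on spherical harmonics of degree $k$. $\binom{p}{q}=0$ when $q>p$. *)

theory Defs
  imports "HOL-Analysis.Analysis"
begin

definition Kinf :: "real \<Rightarrow> real" where
  "Kinf t = (1 / (2 * pi)) * t * (pi - arccos t)"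

definition gegenbauer :: "nat \<Rightarrow> nat \<Rightarrow> real \<Rightarrow> real" where
  "gegenbauer k d t =
     ((-1) ^ k / 2 ^ k) * (Gamma (real d / 2) / Gamma (real k + real d / 2))
     * (1 / (1 - t\<^sup>2) powr ((real d - 2) / 2))
     * (deriv ^^ k) (\<lambda>s. (1 - s\<^sup>2) powr (real k + (real d - 2) / 2)) t"

definition Vd :: "nat \<Rightarrow> real" where
  "Vd d = pi powr (real d / 2) / Gamma (real d / 2 + 1)"

definition acoef :: "nat \<Rightarrow> nat \<Rightarrow> real" where
  "acoef k d = Vd d * integral {-1..1}
     (\<lambda>t. Kinf t * gegenbauer k d t * (1 - t\<^sup>2) powr ((real d - 2) / 2))"

definition C1 :: "nat \<Rightarrow> nat \<Rightarrow> real" where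
  "C1 d k = (pi powr (real d / 2) / (real d / 2)) * ((-1) ^ k / 2 ^ k) * (1 / Gamma (real k + real d / 2))"

text \<open>p = k + (d-2)/2, a natural number for even d.\<close>
definition pidx :: "nat \<Rightarrow> nat \<Rightarrow> nat" where
  "pidx d k = k + (d - 2) div 2"

definition C2 :: "nat \<Rightarrow> nat \<Rightarrow> nat \<Rightarrow> real" where
  "C2 q d k = (-1) ^ q * real (pidx d k choose q) * (fact (2 * q) / fact (2 * q - k))"

end

theory Submission
  imports Defs "HOL-Computational_Algebra.Polynomial"
begin


lemma ftc:
  fixes F f :: "real \<Rightarrow> real"
  assumes "continuous_on {-1..1} F"
    and "\<And>x. -1 < x \<Longrightarrow> x < 1 \<Longrightarrow> (F has_real_derivative f x) (at x)"
  shows "(f has_integral (F 1 - F (-1))) {-1..1}"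
  using assms
  by (intro fundamental_theorem_of_calculus_interior)
     (auto simp: has_real_derivative_iff_has_vector_derivative)

lemma sqrt_deriv:
  assumes "-1 < x" "x < 1"
  shows "((\<lambda>t. sqrt (1 - t\<^sup>2)) has_real_derivative (- x / sqrt (1 - x\<^sup>2))) (at x)"
proof -
  have pos: "0 < 1 - x\<^sup>2" using assms by (simp add: abs_square_less_1)
  show ?thesis
    by (rule derivative_eq_intros refl | use pos in force)+ (use pos in \<open>simp add: field_simps\<close>)
qed

lemma w_facts:
  assumes "-1 < x" "x < 1"
  shows "sqrt (1 - x\<^sup>2) > 0" "sqrt (1 - x\<^sup>2) ^ 2 = 1 - x\<^sup>2"
proof -
  have pos: "0 < 1 - x\<^sup>2" using assms by (simp add: abs_square_less_1)
  then show "sqrt (1 - x\<^sup>2) > 0" by simp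
  show "sqrt (1 - x\<^sup>2) ^ 2 = 1 - x\<^sup>2" using pos by simp
qed

fun S :: "nat \<Rightarrow> real \<Rightarrow> real" where
  "S 0 t = arcsin t"
| "S (Suc 0) t = - sqrt (1 - t\<^sup>2)"
| "S (Suc (Suc m)) t = (real m + 1) / (real m + 2) * S m t - t ^ (m + 1) * sqrt (1 - t\<^sup>2) / (real m + 2)"

lemma S_deriv:
  shows "-1 < x \<Longrightarrow> x < 1 \<Longrightarrow> (S m has_real_derivative (x ^ m / sqrt (1 - x\<^sup>2))) (at x)"
proof (induction m x rule: S.induct)
  case (1 x)
  then show ?case using DERIV_arcsin[of x] by (simp add: divide_inverse)
next
  case (2 x)
  note assms = 2
  have "((\<lambda>t. - sqrt (1 - t\<^sup>2)) has_real_derivative - (- x / sqrt (1 - x\<^sup>2))) (at x)"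
    by (intro DERIV_minus sqrt_deriv assms)
  then show ?case by (simp add: fun_eq_iff)
next
  case (3 m x)
  note assms = "3.prems"
  define w where "w = sqrt (1 - x\<^sup>2)"
  have wp: "w > 0" and w2: "w^2 = 1 - x\<^sup>2" using w_facts[OF assms] by (auto simp: w_def)
  have d1: "((\<lambda>t. t ^ (m + 1) * sqrt (1 - t\<^sup>2)) has_real_derivative
      (real (m+1) * x ^ m * w + x ^ (m+1) * (- x / w))) (at x)"
    using DERIV_mult[OF DERIV_pow[of "m+1" x] sqrt_deriv[OF assms]] by (simp add: w_def mult_ac)
  have "(S (Suc (Suc m)) has_real_derivative
      (real m + 1) / (real m + 2) * (x ^ m / w) - (real (m+1) * x ^ m * w + x ^ (m+1) * (- x / w)) / (real m + 2)) (at x)"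
    unfolding S.simps[abs_def] using 3(1)[OF assms] d1
    by (intro DERIV_diff DERIV_cmult DERIV_cdivide) (auto simp: w_def)
  moreover have "(real m + 1) / (real m + 2) * (x ^ m / w) - (real (m+1) * x ^ m * w + x ^ (m+1) * (- x / w)) / (real m + 2)
      = x ^ Suc (Suc m) / w"
  proof -
    have "w * w = 1 - x*x" using w2 by (simp add: power2_eq_square)
    then show ?thesis using wp
      apply (simp add: divide_simps)
      apply (simp add: mult.assoc)
      apply (simp add: algebra_simps)
      done
  qed
  ultimately show ?case by (simp add: w_def del: S.simps)
qed

lemma S_cont: "continuous_on {-1..1} (S m)"
proof (induction m rule: nat_induct2)
  case 0
  then show ?case using continuous_on_arcsin' by (simp add: fun_eq_iff[symmetric] S.simps(1)[abs_def])
next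
  case 1
  have "S 1 = (\<lambda>t. - sqrt (1 - t\<^sup>2))" by (simp add: fun_eq_iff)
  then show ?case by (simp del: S.simps) (intro continuous_intros)
next
  case (step n)
  then show ?case unfolding add_2_eq_Suc' S.simps(3)[abs_def] by (intro continuous_intros) (use step in auto)
qed

lemma central_binom_step:
  "real ((2*r+2) choose (r+1)) = real ((2*r) choose r) * (2*(2*real r+1)) / (real r+1)"
proof -
  have a: "real ((2*r+2) choose (r+1)) = fact (2*r+2) / (fact (r+1) * fact (r+1))"
    by (subst binomial_fact) auto
  have b: "real ((2*r) choose r) = fact (2*r) / (fact r * fact r)"
    by (subst binomial_fact) auto
  have c: "(fact (2*r+2) :: real) = 2*(real r+1)*(2*real r+1)*fact (2*r)"
    by (simp add: algebra_simps)
  have e: "(fact (r+1) :: real) = (real r+1)*fact r"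
    by (simp add: algebra_simps)
  have nz: "real r + 1 \<noteq> 0" "(fact r :: real) \<noteq> 0" by auto
  show ?thesis unfolding a b c e using nz
    by (simp add: divide_simps) (simp add: algebra_simps)
qed

definition Wd :: "nat \<Rightarrow> real" where
  "Wd m = (if odd m then 0 else pi * real (m choose (m div 2)) / 2 ^ m)"

lemma S_vals: "S m 1 - S m (-1) = Wd m"
proof (induction m rule: nat_induct2)
  case 0
  then show ?case by (simp add: Wd_def)
next
  case 1
  then show ?case by (simp add: Wd_def)
next
  case (step n)
  have "S (n+2) 1 - S (n+2) (-1) = (real n + 1) / (real n + 2) * (S n 1 - S n (-1))"
    unfolding add_2_eq_Suc' by (simp add: algebra_simps diff_divide_distrib)
  also have "\<dots> = Wd (n+2)"
  proof (cases "odd n")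
    case True then show ?thesis using step by (simp add: Wd_def)
  next
    case False
    then obtain r where n: "n = 2*r" by (auto elim: evenE)
    have e1: "Wd (2*r+2) = pi * real((2*r+2) choose (r+1)) / 2^(2*r+2)"
      by (simp add: Wd_def del: binomial_Suc_Suc)
    have e2: "Wd (2*r) = pi * real((2*r) choose r) / 2^(2*r)" by (simp add: Wd_def)
    have "(real n + 1) / (real n + 2) * (S n 1 - S n (-1)) = (2*real r + 1) / (2*real r + 2) * Wd (2*r)"
      using step n by simp
    also have "\<dots> = Wd (2*r+2)"
    proof -
      have p4: "(2::real)^(2*r+2) = 4 * 2^(2*r)" by simp
      have "(2::real)^(2*r) > 0" "real r + 1 > 0" "2 * real r + 2 > 0" by auto
      then show ?thesis unfolding e1 e2 central_binom_step p4
        by (simp add: divide_simps) (simp add: algebra_simps)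
    qed
    finally show ?thesis using n by simp
  qed
  finally show ?case .
qed

lemma J_int:
  "((\<lambda>t. Kinf t * t^n) has_integral (1/(2*(real n+2)) - Wd (n+2)/(2*pi*(real n+2)))) {-1..1}"
proof -
  define G where "G t = t^(n+2)/(2*(real n+2)) - (t^(n+2)*arccos t + S (n+2) t)/(2*pi*(real n+2))" for t
  have cont: "continuous_on {-1..1} G"
    unfolding G_def using S_cont[of "n+2"]
    by (intro continuous_intros continuous_on_arccos') auto
  have der: "(G has_real_derivative Kinf x * x^n) (at x)" if x: "-1 < x" "x < 1" for x
  proof -
    define w where "w = sqrt (1 - x\<^sup>2)"
    have wp: "w > 0" using w_facts[OF x] by (auto simp: w_def)
    have dp: "((\<lambda>x. x^(n+2)) has_real_derivative real(n+2) * x^(n+1)) (at x)"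
      using DERIV_pow[of "n+2" x] by simp
    have "(G has_real_derivative
       (real (n+2) * x^(n+1)) / (2*(real n+2))
       - (real (n+2) * x^(n+1) * arccos x + inverse (- w) * x^(n+2) + x^(n+2) / w)/(2*pi*(real n+2))) (at x)"
      unfolding G_def[abs_def] w_def
      using dp by (intro DERIV_diff DERIV_cdivide DERIV_add DERIV_mult DERIV_arccos x S_deriv)
    moreover have "(real (n+2) * x^(n+1)) / (2*(real n+2))
       - (real (n+2) * x^(n+1) * arccos x + inverse (- w) * x^(n+2) + x^(n+2) / w)/(2*pi*(real n+2))
       = Kinf x * x^n"
      using wp pi_gt_zero unfolding Kinf_def
      by (simp add: divide_simps) (simp add: algebra_simps)
    ultimately show ?thesis by simp
  qed
  have "((\<lambda>t. Kinf t * t^n) has_integral (G 1 - G (-1))) {-1..1}"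
    by (rule ftc[OF cont der])
  moreover have "G 1 - G (-1) = 1/(2*(real n+2)) - Wd (n+2)/(2*pi*(real n+2))"
  proof -
    have "G 1 - G (-1) = 1/(2*(real n+2)) - (S (n+2) 1 - S (n+2) (-1))/(2*pi*(real n+2))"
      unfolding G_def using pi_gt_zero
      by (simp add: divide_simps) (simp add: algebra_simps)
    then show ?thesis by (simp only: S_vals)
  qed
  ultimately show ?thesis by simp
qed

lemma Wd_step: "Wd (2*r+2) = (2*real r + 1) / (2*real r + 2) * Wd (2*r)"
proof -
  have e1: "Wd (2*r+2) = pi * real((2*r+2) choose (r+1)) / 2^(2*r+2)"
    by (simp add: Wd_def del: binomial_Suc_Suc)
  have e2: "Wd (2*r) = pi * real((2*r) choose r) / 2^(2*r)" by (simp add: Wd_def)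
  have p4: "(2::real)^(2*r+2) = 4 * 2^(2*r)" by simp
  have "(2::real)^(2*r) > 0" "real r + 1 > 0" "2 * real r + 2 > 0" by auto
  then show ?thesis unfolding e1 e2 central_binom_step p4
    by (simp add: divide_simps) (simp add: algebra_simps)
qed

fun V :: "nat \<Rightarrow> real \<Rightarrow> real" where
  "V 0 t = arcsin t"
| "V (Suc r) t = ((2 * real r + 1) * V r t + t * sqrt (1 - t\<^sup>2) ^ (2*r+1)) / (2 * real r + 2)"

lemma V_deriv:
  assumes x: "-1 < x" "x < 1"
  shows "(V r has_real_derivative ((1 - x\<^sup>2) ^ r / sqrt (1 - x\<^sup>2))) (at x)"
proof (induction r)
  case 0
  then show ?case using DERIV_arcsin[OF x] by (simp add: divide_inverse)
next
  case (Suc r)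
  define w where "w = sqrt (1 - x\<^sup>2)"
  define U where "U = (1 - x\<^sup>2) ^ r"
  have wp: "w > 0" and w2: "w^2 = 1 - x\<^sup>2" using w_facts[OF x] by (auto simp: w_def)
  have ww: "w * w = 1 - x * x" using w2 by (simp add: power2_eq_square)
  have w2r: "w ^ (2*r) = U" unfolding U_def using w2 by (simp add: power_mult)
  have d1: "((\<lambda>t. sqrt (1 - t\<^sup>2) ^ (2*r+1)) has_real_derivative
      real (2*r+1) * (- x / w) * w ^ (2*r)) (at x)"
    using DERIV_power[OF sqrt_deriv[OF x], of "2*r+1"] by (simp add: w_def mult_ac)
  have d2: "((\<lambda>t. t * sqrt (1 - t\<^sup>2) ^ (2*r+1)) has_real_derivative
      (1 * w ^ (2*r+1) + real (2*r+1) * (- x / w) * w ^ (2*r) * x)) (at x)"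
    using DERIV_mult[OF DERIV_ident d1] by (simp only: w_def)
  have "(V (Suc r) has_real_derivative
      ((2 * real r + 1) * (U / w) + (1 * w ^ (2*r+1) + real (2*r+1) * (- x / w) * w ^ (2*r) * x)) / (2 * real r + 2)) (at x)"
    unfolding V.simps[abs_def] using Suc d2 unfolding U_def w_def
    by (intro DERIV_cdivide DERIV_add DERIV_cmult)
  moreover have "((2 * real r + 1) * (U / w) + (1 * w ^ (2*r+1) + real (2*r+1) * (- x / w) * w ^ (2*r) * x)) / (2 * real r + 2)
     = (1 - x\<^sup>2) ^ Suc r / w"
  proof -
    have a: "w ^ (2*r+1) = U * w" using w2r by simp
    have b: "(1 - x\<^sup>2) ^ Suc r = (1 - x * x) * U" unfolding U_def by (simp add: power2_eq_square)
    show ?thesis unfolding a b w2r using wp ww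
      apply (simp add: divide_simps)
      apply (simp add: mult.assoc)
      apply (simp add: algebra_simps)
      done
  qed
  ultimately show ?case by (simp add: w_def del: V.simps)
qed

lemma V_cont: "continuous_on {-1..1} (V r)"
proof (induction r)
  case 0
  then show ?case using continuous_on_arcsin' by (simp add: V.simps(1)[abs_def])
next
  case (Suc r)
  then show ?case unfolding V.simps(2)[abs_def] by (intro continuous_intros) auto
qed

lemma V_vals: "V r 1 - V r (-1) = Wd (2*r)"
proof (induction r)
  case 0
  then show ?case by (simp add: Wd_def)
next
  case (Suc r)
  have "V (Suc r) 1 - V (Suc r) (-1) = (2*real r + 1) / (2*real r + 2) * (V r 1 - V r (-1))"
    by (simp add: algebra_simps diff_divide_distrib)
  also have "\<dots> = Wd (2 * Suc r)" using Suc Wd_step[of r] by simp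
  finally show ?case .
qed

lemma K0_int:
  "((\<lambda>t. Kinf t * (1 - t\<^sup>2)^m) has_integral
      (real ((2*m+2) choose (m+1)) / ((2*real m+2) * 2^(2*m+3)))) {-1..1}"
proof -
  define H where "H t = - ((1 - t\<^sup>2) ^ (m+1) / (4*(real m+1)))
     + ((1 - t\<^sup>2)^(m+1) * arccos t + V (m+1) t) / (4*pi*(real m+1))" for t
  have cont: "continuous_on {-1..1} H"
    unfolding H_def using V_cont[of "m+1"]
    by (intro continuous_intros continuous_on_arccos') auto
  have der: "(H has_real_derivative Kinf x * (1 - x\<^sup>2)^m) (at x)" if x: "-1 < x" "x < 1" for x
  proof -
    define w where "w = sqrt (1 - x\<^sup>2)"
    have wp: "w > 0" using w_facts[OF x] by (auto simp: w_def)
    have dp: "((\<lambda>t. (1 - t\<^sup>2)^(m+1)) has_real_derivative real (m+1) * (- 2 * x) * (1 - x\<^sup>2)^m) (at x)"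
      using DERIV_power[OF DERIV_diff[OF DERIV_const[of 1] DERIV_pow[of 2 x]], of "m+1"]
      by (simp add: algebra_simps)
    have "(H has_real_derivative
       - ((real (m+1) * (- 2 * x) * (1 - x\<^sup>2)^m) / (4*(real m+1)))
       + (real (m+1) * (- 2 * x) * (1 - x\<^sup>2)^m * arccos x + inverse (- w) * (1 - x\<^sup>2)^(m+1)
          + (1 - x\<^sup>2)^(m+1) / w) / (4*pi*(real m+1))) (at x)"
      unfolding H_def[abs_def] w_def
      using dp V_deriv[OF x, of "m+1"]
      by (intro DERIV_add DERIV_cdivide DERIV_minus DERIV_mult DERIV_arccos x) (auto simp del: V.simps)
    moreover have "- (real (m+1) * (- 2 * x) * (1 - x\<^sup>2)^m) / (4*(real m+1))
       + (real (m+1) * (- 2 * x) * (1 - x\<^sup>2)^m * arccos x + inverse (- w) * (1 - x\<^sup>2)^(m+1)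
          + (1 - x\<^sup>2)^(m+1) / w) / (4*pi*(real m+1))
       = Kinf x * (1 - x\<^sup>2)^m"
      using wp pi_gt_zero unfolding Kinf_def
      by (simp add: divide_simps) (simp add: algebra_simps)
    ultimately show ?thesis by simp
  qed
  have "((\<lambda>t. Kinf t * (1 - t\<^sup>2)^m) has_integral (H 1 - H (-1))) {-1..1}"
    by (rule ftc[OF cont der])
  moreover have "H 1 - H (-1) = real ((2*m+2) choose (m+1)) / ((2*real m+2) * 2^(2*m+3))"
  proof -
    have "H 1 - H (-1) = (V (m+1) 1 - V (m+1) (-1)) / (4*pi*(real m+1))"
      unfolding H_def using pi_gt_zero
      by (simp add: divide_simps del: V.simps)
    also have "\<dots> = Wd (2*m+2) / (4*pi*(real m+1))" using V_vals[of "m+1"] by simp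
    also have "\<dots> = real ((2*m+2) choose (m+1)) / ((2*real m+2) * 2^(2*m+3))"
    proof -
      have e1: "Wd (2*m+2) = pi * real((2*m+2) choose (m+1)) / 2^(2*m+2)"
        by (simp add: Wd_def del: binomial_Suc_Suc)
      have p: "(2::real)^(2*m+3) = 2 * 2^(2*m+2)" by (simp add: power_add)
      show ?thesis unfolding e1 p using pi_gt_zero
        by (simp add: divide_simps)
    qed
    finally show ?thesis .
  qed
  ultimately show ?thesis by simp
qed




lemma deriv_funpow_cong:
  fixes f g :: "real \<Rightarrow> real"
  assumes "open U" "\<And>x. x \<in> U \<Longrightarrow> f x = g x"
  shows "x \<in> U \<Longrightarrow> (deriv^^n) f x = (deriv^^n) g x"
proof (induction n arbitrary: x)
  case 0
  then show ?case using assms by simp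
next
  case (Suc n)
  have ev: "eventually (\<lambda>y. (deriv^^n) f y = (deriv^^n) g y) (nhds x)"
    using eventually_nhds_in_open[OF assms(1) Suc.prems] by (rule eventually_mono) (use Suc.IH in auto)
  show ?case by (simp add: deriv_cong_ev[OF ev refl])
qed

lemma deriv_funpow_sum:
  fixes a :: "'i \<Rightarrow> real" and e :: "'i \<Rightarrow> nat"
  assumes "finite I"
  shows "(deriv^^k) (\<lambda>x. \<Sum>i\<in>I. a i * x^(e i)) =
     (\<lambda>x. \<Sum>i\<in>I. (if k \<le> e i then a i * (fact (e i) / fact (e i - k)) * x^(e i - k) else 0))"
proof (induction k)
  case 0
  then show ?case by simp
next
  case (Suc k)
  have "(deriv^^Suc k) (\<lambda>x. \<Sum>i\<in>I. a i * x^(e i)) =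
      deriv (\<lambda>x. \<Sum>i\<in>I. (if k \<le> e i then a i * (fact (e i) / fact (e i - k)) * x^(e i - k) else 0))"
    using Suc by simp
  also have "\<dots> = (\<lambda>x. \<Sum>i\<in>I. (if Suc k \<le> e i then a i * (fact (e i) / fact (e i - Suc k)) * x^(e i - Suc k) else 0))"
  proof (rule ext, rule DERIV_imp_deriv, rule DERIV_sum)
    fix x i
    show "((\<lambda>x. if k \<le> e i then a i * (fact (e i) / fact (e i - k)) * x ^ (e i - k) else 0) has_real_derivative
          (if Suc k \<le> e i then a i * (fact (e i) / fact (e i - Suc k)) * x ^ (e i - Suc k) else 0)) (at x)"
    proof (cases "Suc k \<le> e i")
      case True
      define j where "j = e i - Suc k"
      have j: "e i - k = Suc j" "e i - Suc k = j" using True by (auto simp: j_def)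
      have f: "(fact (e i - k) :: real) = real (Suc j) * fact j" using j by simp
      have "((\<lambda>x. a i * (fact (e i) / fact (e i - k)) * x ^ Suc j) has_real_derivative
          a i * (fact (e i) / fact (e i - k)) * (real (Suc j) * x ^ j)) (at x)"
        by (intro DERIV_cmult) (use DERIV_pow[of "Suc j" x] in simp)
      moreover have "a i * (fact (e i) / fact (e i - k)) * (real (Suc j) * x ^ j) =
          a i * (fact (e i) / fact (e i - Suc k)) * x ^ (e i - Suc k)"
        unfolding f j by (simp add: field_simps del: of_nat_Suc)
      ultimately show ?thesis using True j by (simp add: mult.assoc)
    next
      case False
      then show ?thesis
      proof (cases "k \<le> e i")
        case True
        with False have "e i = k" by simp
        then show ?thesis using False by simp
      qed simp
    qed
  qed
  finally show ?case .
qed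

lemma deriv_funpow_poly: "(deriv^^k) (\<lambda>x. poly P x) = (\<lambda>x. poly ((pderiv^^k) P) (x::real))"
proof (induction k)
  case 0 then show ?case by simp
next
  case (Suc k)
  have d: "deriv (poly Q) = poly (pderiv Q)" for Q :: "real poly"
    by (rule ext, rule DERIV_imp_deriv, rule poly_DERIV)
  show ?case using Suc by (simp add: d)
qed

lemma pderiv_dvd:
  fixes q :: "real poly"
  assumes "[:-a,1:]^Suc n dvd q"
  shows "[:-a,1:]^n dvd pderiv q"
proof -
  obtain r where q: "q = [:-a,1:]^Suc n * r" using assms by (auto elim: dvdE)
  have "pderiv q = [:-a,1:]^n * (smult (of_nat (Suc n)) (pderiv [:-a,1:]) * r + [:-a,1:] * pderiv r)"
    unfolding q pderiv_mult pderiv_power_Suc by (simp add: algebra_simps)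
  then show ?thesis by simp
qed

lemma PP_dvd:
  assumes "a = 1 \<or> a = (-1::real)"
  shows "[:-a,1:]^p dvd [:1,0,-1:]^p"
proof -
  have "[:-a,1:] dvd [:1,0,-1::real:]"
  proof (cases "a = 1")
    case True
    have "[:1,0,-1::real:] = [:-1,1:] * [:-1,-1:]" by simp
    then show ?thesis using True by (metis dvd_triv_left)
  next
    case False
    then have a: "a = -1" using assms by simp
    have "[:1,0,-1::real:] = [:1,1:] * [:1,-1:]" by simp
    then show ?thesis using a by (metis dvd_triv_left minus_minus)
  qed
  then show ?thesis by (rule dvd_power_same)
qed

lemma PP_zero:
  assumes "a = 1 \<or> a = (-1::real)" "j < p"
  shows "poly ((pderiv^^j) ([:1,0,-1:]^p)) a = 0"
proof -
  have "[:-a,1:]^(p - i) dvd (pderiv^^i) ([:1,0,-1:]^p)" for i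
  proof (induction i)
    case 0 then show ?case using PP_dvd[OF assms(1)] by simp
  next
    case (Suc i)
    show ?case
    proof (cases "p - i")
      case 0
      then show ?thesis by simp
    next
      case (Suc n)
      then have "p - Suc i = n" by simp
      then show ?thesis using pderiv_dvd[of a n] Suc.IH \<open>p - i = Suc n\<close> by simp
    qed
  qed
  then have "[:-a,1:]^(p - j) dvd (pderiv^^j) ([:1,0,-1:]^p)" .
  moreover have "[:-a,1:] dvd [:-a,1:]^(p - j)" using assms(2)
    by (intro dvd_power) auto
  ultimately show ?thesis by (simp add: poly_eq_0_iff_dvd dvd_trans)
qed

lemma PP_sum: "poly ([:1,0,-1:]^p) x = (\<Sum>q\<le>p. ((-1)^q * real (p choose q)) * x^(2*q))"
proof -
  have b: "poly [:1,0,-1::real:] x = - (x^2) + 1" by (simp add: power2_eq_square)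
  have "poly ([:1,0,-1:]^p) x = (- (x^2) + 1)^p" unfolding poly_power b ..
  also have "\<dots> = (\<Sum>q\<le>p. real (p choose q) * (- (x^2))^q * 1^(p-q))" by (rule binomial_ring)
  also have "\<dots> = (\<Sum>q\<le>p. ((-1)^q * real (p choose q)) * x^(2*q))"
  proof (intro sum.cong refl)
    fix q
    have "(- (x^2))^q = (-1)^q * x^(2*q)" by (metis power_minus power_mult)
    then show "real (p choose q) * (- (x^2))^q * 1^(p-q) = ((-1)^q * real (p choose q)) * x^(2*q)"
      by simp
  qed
  finally show ?thesis .
qed



lemma pow_int: "((\<lambda>t::real. t^j) has_integral ((1 - (-1)^(Suc j)) / (real j + 1))) {-1..1}"
proof -
  have "((\<lambda>t::real. t^j) has_integral ((\<lambda>t. t^(Suc j) / (real j + 1)) 1 - (\<lambda>t. t^(Suc j) / (real j + 1)) (-1))) {-1..1}"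
  proof (rule ftc)
    show "continuous_on {-1..1} (\<lambda>t::real. t^(Suc j) / (real j + 1))" by (intro continuous_intros) auto
    fix x :: real
    have der: "((\<lambda>t. t^(Suc j) / (real j + 1)) has_real_derivative (real (Suc j) * x^j) / (real j + 1)) (at x)"
      by (intro DERIV_cdivide) (use DERIV_pow[of "Suc j" x] in simp)
    have e: "(real (Suc j) * x^j) / (real j + 1) = x^j" by (simp add: field_simps)
    show "((\<lambda>t. t^(Suc j) / (real j + 1)) has_real_derivative x^j) (at x)"
      using der[unfolded e] .
  qed
  then show ?thesis by (simp add: add_divide_distrib)
qed

lemma Vd_cc:
  assumes "d \<ge> 2"
  shows "Vd d * (((-1) ^ k / 2 ^ k) * (Gamma (real d / 2) / Gamma (real k + real d / 2))) = C1 d k"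
proof -
  have pos: "real d / 2 > 0" using assms by simp
  have g: "Gamma (real d / 2 + 1) = real d / 2 * Gamma (real d / 2)"
    by (rule Gamma_plus1) (use pos nonpos_Ints_nonpos in force)
  have g1: "Gamma (real d / 2) > 0" using pos by simp
  have gp: "Gamma (real d / 2) \<noteq> 0" using g1 by simp
  have gq: "Gamma (real k + real d / 2) > 0" "Gamma ((real d + real k * 2) / 2) > 0" using pos by simp_all
  show ?thesis unfolding Vd_def C1_def g using pos
    by (simp add: field_simps gp gq)
qed


lemma integrand_eq:
  assumes "even d" "d \<ge> 2" "-1 < t" "t < 1"
  shows "Kinf t * gegenbauer k d t * (1 - t\<^sup>2) powr ((real d - 2) / 2) =
    (((-1) ^ k / 2 ^ k) * (Gamma (real d / 2) / Gamma (real k + real d / 2))) *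
    (Kinf t * poly ((pderiv^^k) ([:1,0,-1:]^(pidx d k))) t)"
proof -
  obtain m where d: "d = 2*m+2" using assms(1,2)
    by (metis add.commute add_diff_cancel_left' dvd_def dvd_diff_nat le_add_diff_inverse2 mult_2 one_add_one)
  have e1: "(real d - 2) / 2 = real m" using d by simp
  have e2: "real k + (real d - 2) / 2 = real (pidx d k)" using d by (simp add: pidx_def)
  have u: "1 - t\<^sup>2 > 0" using assms(3,4) by (simp add: abs_square_less_1)
  have D: "(deriv^^k) (\<lambda>s. (1 - s\<^sup>2) powr real (pidx d k)) t =
      (deriv^^k) (\<lambda>s. poly ([:1,0,-1:]^(pidx d k)) s) t"
  proof (rule deriv_funpow_cong[of "{-1<..<1}"])
    fix s :: real assume "s \<in> {-1<..<1}"
    then have "1 - s\<^sup>2 > 0" by (auto simp add: abs_square_less_1)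
    then show "(1 - s\<^sup>2) powr real (pidx d k) = poly ([:1,0,-1:]^(pidx d k)) s"
      by (simp add: powr_realpow power2_eq_square)
  qed (use assms in auto)
  have P: "(1 - t\<^sup>2) powr real m = (1 - t\<^sup>2) ^ m" using u by (simp add: powr_realpow)
  have P0: "(1 - t\<^sup>2) ^ m > 0" using u by simp
  have G: "gegenbauer k d t = (((-1) ^ k / 2 ^ k) * (Gamma (real d / 2) / Gamma (real k + real d / 2)))
     * (1 / (1 - t\<^sup>2) ^ m) * poly ((pderiv^^k) ([:1,0,-1:]^(pidx d k))) t"
    unfolding gegenbauer_def e2 D deriv_funpow_poly unfolding e1 P by simp
  show ?thesis
    unfolding G e1 P using P0 u
    by (simp add: field_simps)
qed


definition Jv :: "nat \<Rightarrow> real" where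
  "Jv n = 1/(2*(real n+2)) - Wd (n+2)/(2*pi*(real n+2))"

lemma Jv_int: "((\<lambda>t. Kinf t * t^n) has_integral Jv n) {-1..1}"
  unfolding Jv_def by (rule J_int)

lemma Jv_odd: "odd n \<Longrightarrow> Jv n = 1/(2*(real n + 2))"
  unfolding Jv_def Wd_def by simp

lemma Jv_even:
  assumes "even n"
  shows "Jv n = (1/(2*real(n+2))) * (1 - (1/2^(n+2)) * real((n+2) choose ((n+2) div 2)))"
proof -
  have w: "Wd (n+2) = pi * real((n+2) choose ((n+2) div 2)) / 2^(n+2)"
    using assms by (simp add: Wd_def del: binomial_Suc_Suc)
  have "(2::real)^(n+2) > 0" "real n + 2 > 0" using pi_gt_zero by auto
  then show ?thesis unfolding Jv_def w using pi_gt_zero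
    by (simp add: divide_simps del: binomial_Suc_Suc) (simp add: algebra_simps)
qed

lemma D_sum:
  assumes "k \<ge> 1"
  shows "poly ((pderiv^^k) ([:1,0,-1::real:]^p)) t =
    (\<Sum>q\<in>{(k+1) div 2..p}. ((-1)^q * real (p choose q) * (fact (2*q) / fact (2*q-k))) * t^(2*q-k))"
proof -
  have "poly ((pderiv^^k) ([:1,0,-1::real:]^p)) t = (deriv^^k) (\<lambda>x. poly ([:1,0,-1::real:]^p) x) t"
    by (simp only: deriv_funpow_poly)
  also have "(\<lambda>x. poly ([:1,0,-1::real:]^p) x) = (\<lambda>x. \<Sum>q\<le>p. ((-1)^q * real (p choose q)) * x^(2*q))"
    by (rule ext, rule PP_sum)
  also have "(deriv^^k) (\<lambda>x. \<Sum>q\<le>p. ((-1)^q * real (p choose q)) * x^(2*q)) t =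
     (\<Sum>q\<le>p. (if k \<le> 2*q then ((-1)^q * real (p choose q)) * (fact (2*q) / fact (2*q-k)) * t^(2*q-k) else 0))"
    by (subst deriv_funpow_sum) auto
  also have "\<dots> = (\<Sum>q\<in>{q\<in>{..p}. k \<le> 2*q}. ((-1)^q * real (p choose q)) * (fact (2*q) / fact (2*q-k)) * t^(2*q-k))"
    by (rule sum.inter_filter[symmetric]) simp
  also have "{q\<in>{..p}. k \<le> 2*q} = {(k+1) div 2..p}" by auto
  finally show ?thesis .
qed

lemma FT_zero:
  assumes "k \<ge> 2" "k \<le> p"
  shows "((\<lambda>t. t * poly ((pderiv^^k) ([:1,0,-1::real:]^p)) t) has_integral 0) {-1..1}"
proof -
  obtain j where k: "k = Suc (Suc j)" using assms(1) by (metis Suc_le_D add_2_eq_Suc' le_add_diff_inverse2 )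
  define PP where "PP = [:1,0,-1::real:]^p"
  define F where "F t = t * poly ((pderiv^^Suc j) PP) t - poly ((pderiv^^j) PP) t" for t
  have "((\<lambda>t. t * poly ((pderiv^^k) PP) t) has_integral (F 1 - F (-1))) {-1..1}"
  proof (rule ftc)
    show "continuous_on {-1..1} F" unfolding F_def by (intro continuous_intros)
    fix x :: real
    have "(F has_real_derivative (1 * poly ((pderiv^^Suc j) PP) x + poly (pderiv ((pderiv^^Suc j) PP)) x * x
       - poly (pderiv ((pderiv^^j) PP)) x)) (at x)"
      unfolding F_def[abs_def] by (intro DERIV_diff DERIV_mult DERIV_ident poly_DERIV)
    then show "(F has_real_derivative x * poly ((pderiv^^k) PP) x) (at x)"
      unfolding k by (simp add: mult.commute)
  qed
  moreover have "F 1 = 0" "F (-1) = 0" unfolding F_def PP_def using assms k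
      PP_zero[of 1 "Suc j" p] PP_zero[of "-1" "Suc j" p] PP_zero[of 1 j p] PP_zero[of "-1" j p]
    by simp_all
  ultimately show ?thesis by (simp add: PP_def)
qed


theorem mainTheorem6:
  fixes d k :: nat
  assumes "even d" and "d \<ge> 2"
  shows "acoef k d =
    (if k = 0 then
       C1 d 0 * (1 / (real d * 2 ^ (d + 1))) * real (d choose (d div 2))
     else if k = 1 then
       C1 d 1 * (\<Sum>q = 1..pidx d 1. C2 q d 1 * (1 / (2 * (2 * real q + 1))))
     else if even k then
       C1 d k * (\<Sum>q = (k + 1) div 2..pidx d k.
          C2 q d k * (1 / (2 * real (2 * q - k + 2)))
          * (1 - (1 / 2 ^ (2 * q - k + 2)) * real ((2 * q - k + 2) choose ((2 * q - k + 2) div 2))))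
     else 0)"
proof -
  obtain m where d: "d = 2*m+2" using assms(1,2)
    by (metis add.commute add_diff_cancel_left' dvd_def dvd_diff_nat le_add_diff_inverse2 mult_2 one_add_one)
  define p where "p = pidx d k"
  have p: "p = k + m" unfolding p_def pidx_def d by simp
  define cc where "cc = ((-1) ^ k / 2 ^ k) * (Gamma (real d / 2) / Gamma (real k + real d / 2))"
  define D where "D t = poly ((pderiv^^k) ([:1,0,-1::real:]^p)) t" for t
  have red: "acoef k d = C1 d k * I" if h: "((\<lambda>t. Kinf t * D t) has_integral I) {-1..1}" for I
  proof -
    have "((\<lambda>t. Kinf t * gegenbauer k d t * (1 - t\<^sup>2) powr ((real d - 2) / 2)) has_integral cc * I) {-1..1}"
    proof (rule has_integral_spike_finite[of "{-1,1}"])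
      show "((\<lambda>t. cc * (Kinf t * D t)) has_integral cc * I) {-1..1}"
        by (rule has_integral_mult_right[OF h])
      fix x :: real assume "x \<in> {-1..1} - {-1,1}"
      then have "-1 < x" "x < 1" by (auto simp: order.strict_iff_order)
      then show "Kinf x * gegenbauer k d x * (1 - x\<^sup>2) powr ((real d - 2) / 2) = cc * (Kinf x * D x)"
        unfolding cc_def D_def p_def using integrand_eq[OF assms] by blast
    qed simp
    then have "integral {-1..1} (\<lambda>t. Kinf t * gegenbauer k d t * (1 - t\<^sup>2) powr ((real d - 2) / 2)) = cc * I"
      by (rule integral_unique)
    then show ?thesis unfolding acoef_def using Vd_cc[OF assms(2), of k] unfolding cc_def[symmetric]
      by (simp add: mult.assoc[symmetric])
  qed
  show ?thesis
  proof (cases "k = 0")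
    case True
    have "D t = (1 - t\<^sup>2)^m" for t unfolding D_def p True by (simp add: power2_eq_square)
    then have "((\<lambda>t. Kinf t * D t) has_integral (real ((2*m+2) choose (m+1)) / ((2*real m+2) * 2^(2*m+3)))) {-1..1}"
      using K0_int[of m] by simp
    from red[OF this] have "acoef k d = C1 d k * (real ((2*m+2) choose (m+1)) / ((2*real m+2) * 2^(2*m+3)))" .
    moreover have "real ((2*m+2) choose (m+1)) / ((2*real m+2) * 2^(2*m+3)) =
        (1 / (real d * 2^(d+1))) * real (d choose (d div 2))"
    proof -
      have e: "2*m+2 = d" "m+1 = d div 2" "2*real m+2 = real d" "2*m+3 = d+1" using d by auto
      show ?thesis unfolding e by simp
    qed
    ultimately have F: "acoef k d = C1 d k * ((1 / (real d * 2^(d+1))) * real (d choose (d div 2)))"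
      by (simp only:)
    then show ?thesis by (simp only: True if_True simp_thms mult.assoc)
  next
    case False
    then have k1: "k \<ge> 1" by simp
    let ?A = "{(k+1) div 2..p}"
    have Ds: "D t = (\<Sum>q\<in>?A. C2 q d k * t^(2*q-k))" for t
      unfolding D_def D_sum[OF k1] C2_def p_def ..
    have "((\<lambda>t. \<Sum>q\<in>?A. C2 q d k * (Kinf t * t^(2*q-k))) has_integral (\<Sum>q\<in>?A. C2 q d k * Jv (2*q-k))) {-1..1}"
      by (intro has_integral_sum has_integral_mult_right Jv_int) auto
    moreover have "(\<lambda>t. \<Sum>q\<in>?A. C2 q d k * (Kinf t * t^(2*q-k))) = (\<lambda>t. Kinf t * D t)"
      unfolding Ds by (simp add: sum_distrib_left mult_ac)
    ultimately have main: "acoef k d = C1 d k * (\<Sum>q\<in>?A. C2 q d k * Jv (2*q-k))"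
      using red by simp
    show ?thesis
    proof (cases "k = 1")
      case True
      have A: "?A = {1..pidx d 1}" using True p_def by simp
      have "C2 q d k * Jv (2*q-k) = C2 q d 1 * (1 / (2 * (2 * real q + 1)))" if "q \<in> {1..pidx d 1}" for q
      proof -
        have o: "odd (2*q-1)" using that by auto
        have r: "real (2*q-1) + 2 = 2 * real q + 1" using that by (auto simp: of_nat_diff)
        show ?thesis unfolding True Jv_odd[OF o] r ..
      qed
      then have S: "(\<Sum>q\<in>?A. C2 q d k * Jv (2*q-k)) = (\<Sum>q = 1..pidx d 1. C2 q d 1 * (1 / (2 * (2 * real q + 1))))"
        unfolding A by (rule sum.cong[OF refl])
      show ?thesis unfolding main S using True by (simp only: True if_True if_False simp_thms one_neq_zero)
    next
      case False
      show ?thesis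
      proof (cases "even k")
        case True
        have "C2 q d k * Jv (2*q-k) = C2 q d k * (1 / (2 * real (2 * q - k + 2)))
          * (1 - (1 / 2 ^ (2 * q - k + 2)) * real ((2 * q - k + 2) choose ((2 * q - k + 2) div 2)))"
          if "q \<in> ?A" for q
        proof -
          have e: "even (2*q-k)" using True that by auto
          have r: "2*q-k+2 = 2*q-k+2" ..
          show ?thesis unfolding Jv_even[OF e] by simp
        qed
        then have "(\<Sum>q\<in>?A. C2 q d k * Jv (2*q-k)) = (\<Sum>q\<in>?A. C2 q d k * (1 / (2 * real (2 * q - k + 2)))
          * (1 - (1 / 2 ^ (2 * q - k + 2)) * real ((2 * q - k + 2) choose ((2 * q - k + 2) div 2))))"
          by (rule sum.cong[OF refl])
        then show ?thesis unfolding main p_def using True \<open>k \<noteq> 0\<close> \<open>k \<noteq> 1\<close>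
          by (simp only: True if_True if_False simp_thms)
      next
        case odd: False
        have k2: "k \<ge> 2" "k \<le> p" using \<open>k \<noteq> 0\<close> \<open>k \<noteq> 1\<close> p by auto
        have z1: "((\<lambda>t. t * D t) has_integral 0) {-1..1}"
          unfolding D_def by (rule FT_zero[OF k2])
        have "((\<lambda>t. \<Sum>q\<in>?A. C2 q d k * t^(2*q-k+1)) has_integral
            (\<Sum>q\<in>?A. C2 q d k * ((1 - (-1)^(Suc (2*q-k+1))) / (real (2*q-k+1) + 1)))) {-1..1}"
          by (intro has_integral_sum has_integral_mult_right pow_int) auto
        moreover have "(\<lambda>t. \<Sum>q\<in>?A. C2 q d k * t^(2*q-k+1)) = (\<lambda>t. t * D t)"
          unfolding Ds by (simp add: sum_distrib_left mult_ac)
        ultimately have "((\<lambda>t. t * D t) has_integral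
            (\<Sum>q\<in>?A. C2 q d k * ((1 - (-1)^(Suc (2*q-k+1))) / (real (2*q-k+1) + 1)))) {-1..1}"
          by simp
        then have z2: "(\<Sum>q\<in>?A. C2 q d k * ((1 - (-1)^(Suc (2*q-k+1))) / (real (2*q-k+1) + 1))) = 0"
          using z1 has_integral_unique by blast
        have "(\<Sum>q\<in>?A. C2 q d k * Jv (2*q-k)) =
            (\<Sum>q\<in>?A. (1/4) * (C2 q d k * ((1 - (-1)^(Suc (2*q-k+1))) / (real (2*q-k+1) + 1))))"
        proof (rule sum.cong[OF refl])
          fix q assume "q \<in> ?A"
          then have o: "odd (2*q-k)" using odd by auto
          then have "(-1::real)^(Suc (2*q-k+1)) = -1" by simp
          then show "C2 q d k * Jv (2*q-k) = (1/4) * (C2 q d k * ((1 - (-1)^(Suc (2*q-k+1))) / (real (2*q-k+1) + 1)))"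
            using o by (simp add: Jv_odd field_simps)
        qed
        also have "\<dots> = 0" unfolding sum_distrib_left[symmetric] z2 by simp
        finally show ?thesis unfolding main using odd \<open>k \<noteq> 0\<close> \<open>k \<noteq> 1\<close>
          by (simp only: if_True if_False simp_thms mult_zero_right)
      qed
    qed
  qed
qed

end
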